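(* Let $\mathcal M$ be a time-dependent finite-horizon MDP accessed through the quantum oracle $O_{\mathcal{QM}}$, and let $\delta\in(0,1)$. Run the algorithm QVI-1 described in the context. Then, with probability at least $1-\delta$, its outputs satisfy $\hat V_0=V_0^*$ and $\hat\pi$ is an optimal policy, i.e. $V_0^{\hat\pi}=V_0^*$.
   Context: Write $[H]=\{0,\dots,H-1\}$. The MDP $\mathcal M=(\mathcal S,\mathcal A,\{P_h\}_{h\in[H]},\{r_h\}_{h\in[H]},H)$ has finite state space $\mathcal S$ with $S=|\mathcal S|$, finite action space $\mathcal A$ with $A=|\mathcal A|$, rewards $r_h(s,a)\in[0,1]$, and transition distributions $P_h(\cdot\mid s,a)$. Write $P_{h|s,a}\in\mathbb R^{\mathcal S}$ for the vector $(P_h(s'\mid s,a))_{s'}$. A policy is a map $\pi:\mathcal S\times[H]\to\mathcal A$. Its value function is $V_h^\pi(s)=\mathbb E[\sum_{t=h}^{H-1}r_t(s_t,a_t)\mid s_h=s]$, with $a_t=\pi(s_t,t)$ and $s_{t+1}\sim P_t(\cdot\mid s_t,a_t)$. The optimal value is $V_h^*=\max_\pi V_h^\pi$, and $\pi$ is optimal if $V_0^\pi=V_0^*$. Real numbers are stored in fixed-point binary with enough qubits that no overflow occurs; $\overline{x}$ denotes the stored binary representation of $x$. For a vector $f\in\mathbb R^N$, a binary oracle is a unitary $|i\rangle|0\rangle\mapsto|i\rangle|\overline{f(i)}\rangle$. The quantum oracle of $\mathcal M$ is the unitary $O_{\mathcal{QM}}:|s\rangle|a\rangle|h\rangle|s'\rangle|0\rangle|0\rangle\mapsto|s\rangle|a\rangle|h\rangle|s'\rangle|\overline{r_h(s,a)}\rangle|\overline{P_h(s'\mid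 s,a)}\rangle$. QMS (quantum maximum searching) is a subroutine with the following guarantee: given a binary oracle for $f\in\mathbb R^N$ and a parameter $\zeta>0$, it outputs an index $i$ with $f(i)=\max_j f(j)$ with probability at least $1-\zeta$, using at most $\tilde c\sqrt N\log(1/\zeta)$ queries to the oracle, where $\tilde c>0$ is a constant. Algorithm QVI-1$(\mathcal M,\delta)$: - Set $\zeta=\delta/(SH)$ and $\hat V_H=\mathbf 0$. - For $h=H-1,\dots,0$: - Build a binary oracle for the classical vector $\hat V_{h+1}$. - For each $s\in\mathcal S$, build (using $O_{\mathcal{QM}}$ and that oracle) a binary oracle for the vector $\hat Q_{h,s}\in\mathbb R^{\mathcal A}$, where $\hat Q_{h,s}(a)=r_h(s,a)+P_{h|s,a}^{\mathrm T}\hat V_{h+1}$. - For each $s$, set $\hat\pi(s,h)$ to the output of QMS with failure parameter $\zeta$ on $\{\hat Q_{h,s}(a):a\in\mathcal A\}$. - For each $s$, set $\hat V_h(s)=\hat Q_{h,s}(\hat\pi(s,h))$. - Return $\hat\pi$ and $\hat V_0$. *)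

theory Defs
  imports "HOL-Probability.Probability"
begin

text \<open>Rewards r h s a; transitions P h s a :: 's pmf, so that
  P_h(s' | s,a) = pmf (P h s a) s'. A policy is a map pol :: 's => nat => 'a,
  i.e. pol s h is the action at state s and time h.\<close>

fun state_dist :: "(nat \<Rightarrow> 's \<Rightarrow> 'a \<Rightarrow> 's pmf) \<Rightarrow> ('s \<Rightarrow> nat \<Rightarrow> 'a)
    \<Rightarrow> nat \<Rightarrow> 's \<Rightarrow> nat \<Rightarrow> 's pmf" where
  "state_dist P pol h s 0 = return_pmf s"
| "state_dist P pol h s (Suc k) =
     bind_pmf (state_dist P pol h s k) (\<lambda>x. P (h + k) x (pol x (h + k)))"

text \<open>V_h^pol(s) = E[ sum_{t=h}^{H-1} r_t(s_t, pol(s_t,t)) | s_h = s ], written via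
  linearity of expectation over the marginal laws of the states s_t.\<close>
definition value_fun :: "nat \<Rightarrow> (nat \<Rightarrow> 's \<Rightarrow> 'a \<Rightarrow> real) \<Rightarrow> (nat \<Rightarrow> 's \<Rightarrow> 'a \<Rightarrow> 's pmf)
    \<Rightarrow> ('s \<Rightarrow> nat \<Rightarrow> 'a) \<Rightarrow> nat \<Rightarrow> 's \<Rightarrow> real" where
  "value_fun H r P pol h s =
     (\<Sum>k < H - h. measure_pmf.expectation (state_dist P pol h s k)
                     (\<lambda>x. r (h + k) x (pol x (h + k))))"

definition opt_value :: "nat \<Rightarrow> (nat \<Rightarrow> 's \<Rightarrow> 'a \<Rightarrow> real) \<Rightarrow> (nat \<Rightarrow> 's \<Rightarrow> 'a \<Rightarrow> 's pmf)
    \<Rightarrow> nat \<Rightarrow> 's \<Rightarrow> real" where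
  "opt_value H r P h s = (SUP pol. value_fun H r P pol h s)"

text \<open>Abstract model of QMS: qms f zeta is the output distribution of QMS run on
  (a binary oracle for) f :: 'a => real with failure parameter zeta.\<close>
definition qms_spec :: "(('a::finite \<Rightarrow> real) \<Rightarrow> real \<Rightarrow> 'a pmf) \<Rightarrow> bool" where
  "qms_spec qms \<longleftrightarrow> (\<forall>f zeta. zeta > 0 \<longrightarrow>
      measure_pmf.prob (qms f zeta) {a. f a = Max (range f)} \<ge> 1 - zeta)"

definition Q_hat :: "(nat \<Rightarrow> 's::finite \<Rightarrow> 'a \<Rightarrow> real) \<Rightarrow> (nat \<Rightarrow> 's \<Rightarrow> 'a \<Rightarrow> 's pmf)
    \<Rightarrow> ('s \<Rightarrow> real) \<Rightarrow> nat \<Rightarrow> 's \<Rightarrow> 'a \<Rightarrow> real" where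
  "Q_hat r P V h s a = r h s a + (\<Sum>s'\<in>UNIV. pmf (P h s a) s' * V s')"

text \<open>After k iterations of the loop of QVI-1 (i.e. having processed h = H-1,...,H-k):
  distribution of the pair (partial policy pol-hat, V-hat_{H-k}).\<close>
fun qvi_iter :: "nat \<Rightarrow> (nat \<Rightarrow> 's::finite \<Rightarrow> 'a::finite \<Rightarrow> real)
    \<Rightarrow> (nat \<Rightarrow> 's \<Rightarrow> 'a \<Rightarrow> 's pmf) \<Rightarrow> (('a \<Rightarrow> real) \<Rightarrow> real \<Rightarrow> 'a pmf) \<Rightarrow> real
    \<Rightarrow> nat \<Rightarrow> (('s \<Rightarrow> nat \<Rightarrow> 'a) \<times> ('s \<Rightarrow> real)) pmf" where
  "qvi_iter H r P qms zeta 0 = return_pmf (\<lambda>s t. undefined, \<lambda>s. 0)"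
| "qvi_iter H r P qms zeta (Suc k) =
     bind_pmf (qvi_iter H r P qms zeta k) (\<lambda>(pol, V).
       (let h = H - Suc k in
        map_pmf (\<lambda>act. (\<lambda>s t. if t = h then act s else pol s t,
                         \<lambda>s. Q_hat r P V h s (act s)))
          (Pi_pmf UNIV undefined (\<lambda>s. qms (Q_hat r P V h s) zeta))))"

definition QVI1 :: "nat \<Rightarrow> (nat \<Rightarrow> 's::finite \<Rightarrow> 'a::finite \<Rightarrow> real)
    \<Rightarrow> (nat \<Rightarrow> 's \<Rightarrow> 'a \<Rightarrow> 's pmf) \<Rightarrow> (('a \<Rightarrow> real) \<Rightarrow> real \<Rightarrow> 'a pmf) \<Rightarrow> real
    \<Rightarrow> (('s \<Rightarrow> nat \<Rightarrow> 'a) \<times> ('s \<Rightarrow> real)) pmf" where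
  "QVI1 H r P qms \<delta> = qvi_iter H r P qms (\<delta> / (real CARD('s) * real H)) H"

end

theory Submission
  imports Defs
begin

lemma prob_bind_ge:
  fixes p :: "'x pmf" and q :: "'x \<Rightarrow> 'y pmf"
  assumes "\<And>x. x \<in> set_pmf p \<Longrightarrow> x \<in> G \<Longrightarrow> measure (q x) A \<ge> 1 - c" "c \<ge> 0"
  shows "measure (bind_pmf p q) A \<ge> measure p G - c"
proof -
  have eq: "measure (bind_pmf p q) A = (\<integral>x. measure (q x) A \<partial>p)"
    unfolding measure_pmf_bind
    by (rule measure_pmf.measure_bind[where N="count_space UNIV"])
       (auto simp: measure_pmf_in_subprob_algebra)
  have "measure p G - c = (\<integral>x. indicator G x - c \<partial>p)"
    by (simp add: measure_pmf.emeasure_eq_measure)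
  also have "\<dots> \<le> (\<integral>x. measure (q x) A \<partial>p)"
  proof (rule integral_mono_AE)
    show "integrable (measure_pmf p) (\<lambda>x. indicator G x - c)"
      by (rule measure_pmf.integrable_const_bound[where B="1 + \<bar>c\<bar>"]) (auto simp: indicator_def)
    show "integrable (measure_pmf p) (\<lambda>x. measure (q x) A)"
      by (rule measure_pmf.integrable_const_bound[where B=1]) auto
    show "AE x in measure_pmf p. indicator G x - c \<le> measure (q x) A"
      using assms by (auto simp: AE_measure_pmf_iff indicator_def intro: order.trans[OF _ measure_nonneg])
  qed
  finally show ?thesis using eq by simp
qed

lemma exp_fin:
  fixes p :: "'s::finite pmf"
  shows "measure_pmf.expectation p f = (\<Sum>x\<in>UNIV. pmf p x * f x)"
  by (subst integral_measure_pmf_real[where A=UNIV]) (auto simp: mult.commute)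

lemma exp_bind:
  fixes p :: "'s::finite pmf" and q :: "'s \<Rightarrow> 't::finite pmf"
  shows "measure_pmf.expectation (bind_pmf p q) f
       = (\<Sum>y\<in>UNIV. pmf p y * measure_pmf.expectation (q y) f)"
proof -
  have "measure_pmf.expectation (bind_pmf p q) f
      = (\<Sum>x\<in>UNIV. (\<Sum>y\<in>UNIV. pmf p y * pmf (q y) x) * f x)"
    by (simp add: exp_fin pmf_bind)
  also have "\<dots> = (\<Sum>y\<in>UNIV. pmf p y * (\<Sum>x\<in>UNIV. pmf (q y) x * f x))"
    by (simp add: sum_distrib_left sum_distrib_right mult.assoc) (rule sum.swap)
  finally show ?thesis by (simp add: exp_fin)
qed

lemma sd_shift:
  "state_dist P pol h s (Suc k) = bind_pmf (P h s (pol s h)) (\<lambda>s'. state_dist P pol (Suc h) s' k)"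
proof (induction k)
  case 0
  then show ?case by (simp add: bind_return_pmf bind_return_pmf')
next
  case (Suc k)
  have "state_dist P pol h s (Suc (Suc k)) =
     bind_pmf (state_dist P pol h s (Suc k)) (\<lambda>x. P (h + Suc k) x (pol x (h + Suc k)))"
    by simp
  also have "\<dots> = bind_pmf (P h s (pol s h)) (\<lambda>s'. state_dist P pol (Suc h) s' (Suc k))"
    unfolding Suc by (simp add: bind_assoc_pmf)
  finally show ?case .
qed

lemma value_rec:
  fixes r :: "nat \<Rightarrow> 's::finite \<Rightarrow> 'a \<Rightarrow> real"
  assumes "h < H"
  shows "value_fun H r P pol h s = r h s (pol s h)
          + (\<Sum>s'\<in>UNIV. pmf (P h s (pol s h)) s' * value_fun H r P pol (Suc h) s')"
proof -
  have HH: "H - h = Suc (H - Suc h)" using assms by simp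
  show ?thesis
    unfolding value_fun_def HH sum.lessThan_Suc_shift
    apply (simp only: sd_shift exp_bind)
    apply (simp add: sum_distrib_left)
    by (rule sum.swap)
qed

fun W :: "nat \<Rightarrow> (nat \<Rightarrow> 's::finite \<Rightarrow> 'a::finite \<Rightarrow> real) \<Rightarrow> (nat \<Rightarrow> 's \<Rightarrow> 'a \<Rightarrow> 's pmf)
    \<Rightarrow> nat \<Rightarrow> 's \<Rightarrow> real" where
  "W H r P 0 = (\<lambda>s. 0)"
| "W H r P (Suc k) = (\<lambda>s. Max (range (Q_hat r P (W H r P k) (H - Suc k) s)))"

definition greedy :: "nat \<Rightarrow> (nat \<Rightarrow> 's::finite \<Rightarrow> 'a::finite \<Rightarrow> real) \<Rightarrow> (nat \<Rightarrow> 's \<Rightarrow> 'a \<Rightarrow> 's pmf)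
    \<Rightarrow> ('s \<Rightarrow> nat \<Rightarrow> 'a) \<Rightarrow> nat \<Rightarrow> bool" where
  "greedy H r P pol t \<longleftrightarrow> (\<forall>s. Q_hat r P (W H r P (H - Suc t)) t s (pol s t)
      = Max (range (Q_hat r P (W H r P (H - Suc t)) t s)))"

lemma value_zero: "H \<le> h \<Longrightarrow> value_fun H r P pol h s = 0"
  by (simp add: value_fun_def)

lemma value_le_W:
  fixes r :: "nat \<Rightarrow> 's::finite \<Rightarrow> 'a::finite \<Rightarrow> real"
  shows "k = H - h \<Longrightarrow> h \<le> H \<Longrightarrow> value_fun H r P pol h s \<le> W H r P k s"
proof (induction k arbitrary: h s)
  case 0
  then show ?case by (simp add: value_zero)
next
  case (Suc k)
  then have hH: "h < H" and k: "k = H - Suc h" "H - Suc k = h" by auto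
  have IH: "\<And>s'. value_fun H r P pol (Suc h) s' \<le> W H r P k s'"
    using Suc.IH[OF k(1)] hH by simp
  have "value_fun H r P pol h s = r h s (pol s h)
          + (\<Sum>s'\<in>UNIV. pmf (P h s (pol s h)) s' * value_fun H r P pol (Suc h) s')"
    by (rule value_rec[OF hH])
  also have "\<dots> \<le> r h s (pol s h) + (\<Sum>s'\<in>UNIV. pmf (P h s (pol s h)) s' * W H r P k s')"
    by (intro add_left_mono sum_mono mult_left_mono IH) simp
  also have "\<dots> = Q_hat r P (W H r P k) h s (pol s h)" by (simp add: Q_hat_def)
  also have "\<dots> \<le> W H r P (Suc k) s"
    using k by simp
  finally show ?case .
qed

lemma value_eq_W:
  fixes r :: "nat \<Rightarrow> 's::finite \<Rightarrow> 'a::finite \<Rightarrow> real"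
  shows "k = H - h \<Longrightarrow> h \<le> H \<Longrightarrow> (\<forall>t. h \<le> t \<and> t < H \<longrightarrow> greedy H r P pol t)
     \<Longrightarrow> value_fun H r P pol h s = W H r P k s"
proof (induction k arbitrary: h s)
  case 0
  then show ?case by (simp add: value_zero)
next
  case (Suc k)
  then have hH: "h < H" and k: "k = H - Suc h" "H - Suc k = h" by auto
  have IH: "\<And>s'. value_fun H r P pol (Suc h) s' = W H r P k s'"
    using Suc.IH[OF k(1)] Suc.prems hH by simp
  have g: "greedy H r P pol h" using Suc.prems hH by simp
  have "value_fun H r P pol h s = r h s (pol s h)
          + (\<Sum>s'\<in>UNIV. pmf (P h s (pol s h)) s' * value_fun H r P pol (Suc h) s')"
    by (rule value_rec[OF hH])
  also have "\<dots> = Q_hat r P (W H r P k) h s (pol s h)" by (simp add: Q_hat_def IH)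
  also have "\<dots> = W H r P (Suc k) s"
    using g k unfolding greedy_def by simp
  finally show ?case .
qed

lemma opt_eq_W:
  fixes r :: "nat \<Rightarrow> 's::finite \<Rightarrow> 'a::finite \<Rightarrow> real"
  assumes "h \<le> H"
  shows "opt_value H r P h s = W H r P (H - h) s"
proof -
  define gp :: "'s \<Rightarrow> nat \<Rightarrow> 'a" where "gp = (\<lambda>s t. SOME a. Q_hat r P (W H r P (H - Suc t)) t s a
      = Max (range (Q_hat r P (W H r P (H - Suc t)) t s)))"
  have "greedy H r P gp t" for t
    unfolding greedy_def gp_def
  proof
    fix s
    let ?f = "Q_hat r P (W H r P (H - Suc t)) t s"
    have "Max (range ?f) \<in> range ?f" by (rule Max_in) auto
    then have "\<exists>a. ?f a = Max (range ?f)" by (metis imageE)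
    then show "?f (SOME a. ?f a = Max (range ?f)) = Max (range ?f)" by (rule someI_ex)
  qed
  then have eq: "value_fun H r P gp h s = W H r P (H - h) s"
    using value_eq_W assms by blast
  show ?thesis unfolding opt_value_def
  proof (rule cSup_eq_maximum)
    show "W H r P (H - h) s \<in> range (\<lambda>pol. value_fun H r P pol h s)"
      using eq[symmetric] by blast
    show "\<And>x. x \<in> range (\<lambda>pol. value_fun H r P pol h s) \<Longrightarrow> x \<le> W H r P (H - h) s"
      using value_le_W[OF refl assms] by blast
  qed
qed

definition good :: "nat \<Rightarrow> (nat \<Rightarrow> 's::finite \<Rightarrow> 'a::finite \<Rightarrow> real) \<Rightarrow> (nat \<Rightarrow> 's \<Rightarrow> 'a \<Rightarrow> 's pmf)
    \<Rightarrow> nat \<Rightarrow> (('s \<Rightarrow> nat \<Rightarrow> 'a) \<times> ('s \<Rightarrow> real)) set" where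
  "good H r P k = {(pol, V). V = W H r P k \<and> (\<forall>t. H - k \<le> t \<and> t < H \<longrightarrow> greedy H r P pol t)}"

lemma qms_step:
  fixes qms :: "('a::finite \<Rightarrow> real) \<Rightarrow> real \<Rightarrow> 'a pmf" and Q :: "'s::finite \<Rightarrow> 'a \<Rightarrow> real"
  assumes qms: "qms_spec qms" and z: "zeta > 0"
  shows "measure (Pi_pmf UNIV undefined (\<lambda>s. qms (Q s) zeta))
           {act. \<forall>s. Q s (act s) = Max (range (Q s))} \<ge> 1 - real CARD('s) * zeta"
proof -
  let ?M = "Pi_pmf UNIV undefined (\<lambda>s. qms (Q s) zeta)"
  let ?B = "{act. \<forall>s. Q s (act s) = Max (range (Q s))}"
  let ?C = "\<lambda>s. {act. Q s (act s) \<noteq> Max (range (Q s))}"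
  have each: "measure ?M (?C s) \<le> zeta" for s
  proof -
    have "measure ?M (?C s) = measure (map_pmf (\<lambda>f. f s) ?M) {a. Q s a \<noteq> Max (range (Q s))}"
      by simp
    also have "\<dots> = measure (qms (Q s) zeta) (- {a. Q s a = Max (range (Q s))})"
      by (subst Pi_pmf_component) (auto simp: Compl_eq)
    also have "\<dots> = 1 - measure (qms (Q s) zeta) {a. Q s a = Max (range (Q s))}"
      using measure_pmf.prob_compl[of "{a. Q s a = Max (range (Q s))}" "qms (Q s) zeta"]
      by (simp add: Compl_eq_Diff_UNIV)
    also have "\<dots> \<le> zeta"
    proof -
      have "1 - zeta \<le> measure (qms (Q s) zeta) {a. Q s a = Max (range (Q s))}"
        using qms z unfolding qms_spec_def by blast
      then show ?thesis by linarith
    qed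
    finally show ?thesis .
  qed
  have "measure ?M (- ?B) = measure ?M (\<Union>s\<in>UNIV. ?C s)"
    by (rule arg_cong[where f="measure ?M"]) auto
  also have "\<dots> \<le> (\<Sum>s\<in>UNIV. measure ?M (?C s))"
    by (rule measure_pmf.finite_measure_subadditive_finite) auto
  also have "\<dots> \<le> (\<Sum>s\<in>(UNIV::'s set). zeta)"
    by (rule sum_mono) (rule each)
  finally have "measure ?M (- ?B) \<le> real CARD('s) * zeta" by simp
  moreover have "measure ?M (- ?B) = 1 - measure ?M ?B"
    using measure_pmf.prob_compl[of ?B ?M] by (simp add: Compl_eq_Diff_UNIV)
  ultimately show ?thesis by simp
qed

lemma inv:
  fixes r :: "nat \<Rightarrow> 's::finite \<Rightarrow> 'a::finite \<Rightarrow> real"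
  assumes qms: "qms_spec qms"
  shows "k \<le> H \<Longrightarrow> (0 < k \<Longrightarrow> zeta > 0) \<Longrightarrow>
    measure (qvi_iter H r P qms zeta k) (good H r P k) \<ge> 1 - real k * real CARD('s) * zeta"
proof (induction k)
  case 0
  then show ?case by (simp add: good_def indicator_def)
next
  case (Suc k)
  have z: "zeta > 0" using Suc.prems by simp
  have IH: "measure (qvi_iter H r P qms zeta k) (good H r P k) \<ge> 1 - real k * real CARD('s) * zeta"
    using Suc z by simp
  let ?h = "H - Suc k"
  have "measure (qvi_iter H r P qms zeta (Suc k)) (good H r P (Suc k))
      \<ge> measure (qvi_iter H r P qms zeta k) (good H r P k) - real CARD('s) * zeta"
    unfolding qvi_iter.simps
  proof (rule prob_bind_ge)
    show "0 \<le> real CARD('s) * zeta" using z by simp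
    fix x assume "x \<in> good H r P k"
    then obtain pol where x: "x = (pol, W H r P k)"
      and gp: "\<forall>t. H - k \<le> t \<and> t < H \<longrightarrow> greedy H r P pol t"
      by (auto simp: good_def)
    let ?Q = "\<lambda>s. Q_hat r P (W H r P k) ?h s"
    let ?g = "\<lambda>act. (\<lambda>s t. if t = ?h then act s else pol s t, \<lambda>s. ?Q s (act s))"
    have sub: "{act. \<forall>s. ?Q s (act s) = Max (range (?Q s))} \<subseteq> ?g -` good H r P (Suc k)"
    proof
      fix act assume a: "act \<in> {act. \<forall>s. ?Q s (act s) = Max (range (?Q s))}"
      have "(\<lambda>s. ?Q s (act s)) = W H r P (Suc k)" using a by auto
      moreover have "greedy H r P (\<lambda>s t. if t = ?h then act s else pol s t) t"
        if "H - Suc k \<le> t" "t < H" for t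
      proof (cases "t = ?h")
        case True
        then have "H - Suc t = k" using Suc.prems that by auto
        then show ?thesis using a True unfolding greedy_def by auto
      next
        case False
        then have "H - k \<le> t" using that by auto
        then have "greedy H r P pol t" using gp that by auto
        then show ?thesis using False unfolding greedy_def by auto
      qed
      ultimately show "act \<in> ?g -` good H r P (Suc k)" unfolding good_def by auto
    qed
    have "1 - real CARD('s) * zeta
        \<le> measure (Pi_pmf UNIV undefined (\<lambda>s. qms (?Q s) zeta)) {act. \<forall>s. ?Q s (act s) = Max (range (?Q s))}"
      by (rule qms_step[OF qms z])
    also have "\<dots> \<le> measure (Pi_pmf UNIV undefined (\<lambda>s. qms (?Q s) zeta)) (?g -` good H r P (Suc k))"
      by (rule measure_pmf.finite_measure_mono[OF sub]) simp
    finally show "1 - real CARD('s) * zeta \<le> measure (case x of (pol, V) \<Rightarrow>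
          let h = H - Suc k in map_pmf (\<lambda>act. (\<lambda>s t. if t = h then act s else pol s t,
             \<lambda>s. Q_hat r P V h s (act s))) (Pi_pmf UNIV undefined (\<lambda>s. qms (Q_hat r P V h s) zeta)))
          (good H r P (Suc k))"
      unfolding x by (simp add: Let_def)
  qed
  then show ?case using IH by (simp add: algebra_simps)
qed

theorem theorem3p5:
  fixes H :: nat
    and r :: "nat \<Rightarrow> 's::finite \<Rightarrow> 'a::finite \<Rightarrow> real"
    and P :: "nat \<Rightarrow> 's \<Rightarrow> 'a \<Rightarrow> 's pmf"
    and qms :: "('a \<Rightarrow> real) \<Rightarrow> real \<Rightarrow> 'a pmf"
    and \<delta> :: real
  assumes r_bounds: "\<And>h s a. 0 \<le> r h s a \<and> r h s a \<le> 1"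
    and qms: "qms_spec qms"
    and delta: "0 < \<delta>" "\<delta> < 1"
  shows "measure_pmf.prob (QVI1 H r P qms \<delta>)
           {(pol_hat, V0_hat). V0_hat = opt_value H r P 0
                              \<and> value_fun H r P pol_hat 0 = opt_value H r P 0}
         \<ge> 1 - \<delta>"
proof -
  define zeta where "zeta = \<delta> / (real CARD('s) * real H)"
  have "0 < H \<Longrightarrow> zeta > 0" unfolding zeta_def using delta by simp
  then have I: "measure (qvi_iter H r P qms zeta H) (good H r P H) \<ge> 1 - real H * real CARD('s) * zeta"
    using inv[OF qms, of H H zeta] by simp
  have bound: "1 - real H * real CARD('s) * zeta \<ge> 1 - \<delta>"
    using delta unfolding zeta_def by (cases "H = 0") auto
  have sub: "good H r P H \<subseteq> {(pol_hat, V0_hat). V0_hat = opt_value H r P 0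
                              \<and> value_fun H r P pol_hat 0 = opt_value H r P 0}"
  proof
    fix x assume "x \<in> good H r P H"
    then obtain pol V where x: "x = (pol, V)" and V: "V = W H r P H"
      and g: "\<forall>t. 0 \<le> t \<and> t < H \<longrightarrow> greedy H r P pol t"
      by (auto simp: good_def)
    have o: "opt_value H r P 0 = W H r P H" using opt_eq_W[of 0 H r P] by auto
    have "value_fun H r P pol 0 = W H r P H"
      using value_eq_W[OF _ _ g] by auto
    then show "x \<in> {(pol_hat, V0_hat). V0_hat = opt_value H r P 0
                              \<and> value_fun H r P pol_hat 0 = opt_value H r P 0}"
      using x V o by auto
  qed
  have "measure (qvi_iter H r P qms zeta H) (good H r P H) \<le> measure (QVI1 H r P qms \<delta>)
           {(pol_hat, V0_hat). V0_hat = opt_value H r P 0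
                              \<and> value_fun H r P pol_hat 0 = opt_value H r P 0}"
    unfolding QVI1_def zeta_def[symmetric]
    by (rule measure_pmf.finite_measure_mono[OF sub]) simp
  then show ?thesis using I bound by linarith
qed

end
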